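(* Let $\mathbb{F}=\mathbb{F}_p$, $r_1,\dots,r_n\in\mathbb{F}^N$, and let $j_1,\dots,j_k\in[N]$ be distinct. Then $$\mathcal{S}^{\{j_1,\dots,j_k\}}(r_1,\dots,r_n)=\sum_{\tau=(\tau_1,\dots,\tau_k)}\ \prod_{t=1}^k\Big((-1)^{|\tau_t|}|\tau_t|!\;r_{\tau_t}(j_t)\Big)\cdot\mathcal{S}\Big(r\big[[n]\setminus\textstyle\bigcup_t\tau_t\big]\Big),$$ where the sum is over all ordered $k$-tuples of pairwise disjoint, possibly empty, subsets $\tau_t$ of $[n]$.
   Context: For vectors $w_1,\dots,w_L\in\mathbb{F}^N$ and $T\subseteq[N]$, $\mathcal{S}^T(w_1,\dots,w_L)=\sum_\rho\prod_{i=1}^Lw_i(\rho(i))$ over injective maps $\rho:[L]\to[N]\setminus T$, and $\mathcal{S}=\mathcal{S}^{\emptyset}$. For $\tau\subseteq[n]$, $r_\tau$ is the coordinatewise product of $r_i$, $i\in\tau$ (the all-ones vector if $\tau=\emptyset$); $r[\sigma]$ is the list of $r_i$, $i\in\sigma$, and $\mathcal{S}(r[\emptyset])=1$. $r(j)$ is the $j$-th coordinate. *)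

theory Defs
  imports Main "HOL-Library.FuncSet" "HOL-Library.Cardinality" "HOL-Computational_Algebra.Primes"
begin

text \<open>Vectors in F^N are functions nat => 'a, of which only the coordinates 1..N matter.\<close>
definition S_T :: "nat \<Rightarrow> nat set \<Rightarrow> (nat \<Rightarrow> 'a::comm_ring_1) list \<Rightarrow> 'a" where
  "S_T N T ws = (\<Sum>\<rho> \<in> {\<rho>. \<rho> \<in> {1..length ws} \<rightarrow>\<^sub>E ({1..N} - T) \<and> inj_on \<rho> {1..length ws}}.
      \<Prod>i=1..length ws. (ws ! (i - 1)) (\<rho> i))"

abbreviation S :: "nat \<Rightarrow> (nat \<Rightarrow> 'a::comm_ring_1) list \<Rightarrow> 'a" where
  "S N ws \<equiv> S_T N {} ws"

definition sublist_vecs :: "(nat \<Rightarrow> (nat \<Rightarrow> 'a)) \<Rightarrow> nat set \<Rightarrow> (nat \<Rightarrow> 'a) list" where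
  "sublist_vecs r \<sigma> = map r (sorted_list_of_set \<sigma>)"

definition prod_vec :: "(nat \<Rightarrow> (nat \<Rightarrow> 'a::comm_ring_1)) \<Rightarrow> nat set \<Rightarrow> nat \<Rightarrow> 'a" where
  "prod_vec r \<tau> = (\<lambda>j. \<Prod>i\<in>\<tau>. r i j)"

end

theory Submission imports Defs begin

definition inj_maps :: "nat set \<Rightarrow> nat set \<Rightarrow> (nat \<Rightarrow> nat) set" where
  "inj_maps I B = {\<rho>. \<rho> \<in> I \<rightarrow>\<^sub>E B \<and> inj_on \<rho> I}"

definition SS :: "(nat \<Rightarrow> nat \<Rightarrow> 'a::comm_ring_1) \<Rightarrow> nat set \<Rightarrow> nat set \<Rightarrow> 'a" where
  "SS r B I = (\<Sum>\<rho>\<in>inj_maps I B. \<Prod>i\<in>I. r i (\<rho> i))"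

lemma finite_inj_maps: "finite I \<Longrightarrow> finite B \<Longrightarrow> finite (inj_maps I B)"
  unfolding inj_maps_def by (rule finite_subset[OF _ finite_PiE[of I "\<lambda>_. B"]]) auto

lemma SS_fix:
  assumes A: "finite A" and I: "finite I" and jA: "j \<in> A" and iI: "i \<in> I"
  shows "(\<Sum>\<rho>\<in>{\<rho>\<in>inj_maps I A. \<rho> i = j}. \<Prod>x\<in>I. r x (\<rho> x)) = r i j * SS r (A-{j}) (I-{i})"
  unfolding SS_def sum_distrib_left
proof (rule sum.reindex_bij_witness[where i="\<lambda>\<rho>. \<rho>(i:=j)" and j="\<lambda>\<rho>. \<rho>(i:=undefined)"])
  fix \<rho> assume "\<rho> \<in> {\<rho>\<in>inj_maps I A. \<rho> i = j}"
  then have h: "\<rho> \<in> I \<rightarrow>\<^sub>E A" "inj_on \<rho> I" "\<rho> i = j" by (auto simp: inj_maps_def)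
  show "(\<rho>(i:=undefined))(i:=j) = \<rho>" using h by auto
  show "\<rho>(i:=undefined) \<in> inj_maps (I-{i}) (A-{j})"
    using h iI unfolding inj_maps_def by (auto simp: PiE_def extensional_def inj_on_def)
  have "(\<Prod>x\<in>I. r x (\<rho> x)) = r i (\<rho> i) * (\<Prod>x\<in>I-{i}. r x (\<rho> x))"
    using I iI by (simp add: prod.remove)
  also have "(\<Prod>x\<in>I-{i}. r x (\<rho> x)) = (\<Prod>x\<in>I-{i}. r x ((\<rho>(i:=undefined)) x))"
    by (rule prod.cong) auto
  finally show "r i j * (\<Prod>x\<in>I-{i}. r x ((\<rho>(i:=undefined)) x)) = (\<Prod>x\<in>I. r x (\<rho> x))"
    using h by simp
next
  fix \<rho> assume "\<rho> \<in> inj_maps (I-{i}) (A-{j})"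
  then have h: "\<rho> \<in> (I-{i}) \<rightarrow>\<^sub>E (A-{j})" "inj_on \<rho> (I-{i})" by (auto simp: inj_maps_def)
  then have "\<rho> i = undefined" by (auto simp: PiE_def extensional_def)
  then show "(\<rho>(i:=j))(i:=undefined) = \<rho>" by auto
  show "\<rho>(i:=j) \<in> {\<rho>\<in>inj_maps I A. \<rho> i = j}"
    using h iI jA unfolding inj_maps_def
    by (auto simp: PiE_def extensional_def inj_on_def Pi_def split: if_splits)
qed

lemma SS_rec:
  assumes A: "finite A" and I: "finite I" and jA: "j \<in> A"
  shows "SS r A I = SS r (A-{j}) I + (\<Sum>i\<in>I. r i j * SS r (A-{j}) (I-{i}))"
proof -
  have split: "inj_maps I A = inj_maps I (A-{j}) \<union> (\<Union>i\<in>I. {\<rho>\<in>inj_maps I A. \<rho> i = j})"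
    unfolding inj_maps_def by (auto simp: PiE_def Pi_def)
  have fin: "finite (inj_maps I A)" by (rule finite_inj_maps[OF I A])
  have "SS r A I = SS r (A-{j}) I + (\<Sum>\<rho>\<in>(\<Union>i\<in>I. {\<rho>\<in>inj_maps I A. \<rho> i = j}). \<Prod>x\<in>I. r x (\<rho> x))"
    unfolding SS_def
    apply (subst split)
    apply (rule sum.union_disjoint)
      apply (rule finite_inj_maps[OF I]; use A in simp)
     apply (rule finite_subset[OF _ fin]; blast)
    by (auto simp: inj_maps_def dest: PiE_mem)
  also have "(\<Sum>\<rho>\<in>(\<Union>i\<in>I. {\<rho>\<in>inj_maps I A. \<rho> i = j}). \<Prod>x\<in>I. r x (\<rho> x))
     = (\<Sum>i\<in>I. \<Sum>\<rho>\<in>{\<rho>\<in>inj_maps I A. \<rho> i = j}. \<Prod>x\<in>I. r x (\<rho> x))"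
    apply (rule sum.UNION_disjoint[OF I])
    using fin apply auto[1]
    unfolding inj_maps_def inj_on_def by auto
  also have "\<dots> = (\<Sum>i\<in>I. r i j * SS r (A-{j}) (I-{i}))"
    by (rule sum.cong[OF refl], rule SS_fix[OF A I jA])
  finally show ?thesis .
qed



definition cc :: "(nat \<Rightarrow> nat \<Rightarrow> 'a::comm_ring_1) \<Rightarrow> nat set \<Rightarrow> nat \<Rightarrow> 'a" where
  "cc r \<sigma> j = (-1) ^ card \<sigma> * of_nat (fact (card \<sigma>) :: nat) * prod_vec r \<sigma> j"

lemma cc_empty[simp]: "cc r {} j = 1"
  by (simp add: cc_def prod_vec_def)

lemma cc_remove:
  assumes "finite \<sigma>" "\<sigma> \<noteq> {}"
  shows "(\<Sum>i\<in>\<sigma>. r i j * cc r (\<sigma>-{i}) j) = - cc r \<sigma> j"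
proof -
  obtain m where m: "card \<sigma> = Suc m" using assms by (metis card_0_eq not0_implies_Suc)
  have "\<And>i. i \<in> \<sigma> \<Longrightarrow> r i j * cc r (\<sigma>-{i}) j = (-1)^m * of_nat (fact m) * prod_vec r \<sigma> j"
  proof -
    fix i assume i: "i \<in> \<sigma>"
    have c: "card (\<sigma>-{i}) = m" using m i assms by simp
    have "prod_vec r \<sigma> j = r i j * prod_vec r (\<sigma>-{i}) j"
      unfolding prod_vec_def using assms i by (simp add: prod.remove)
    then show "r i j * cc r (\<sigma>-{i}) j = (-1)^m * of_nat (fact m) * prod_vec r \<sigma> j"
      unfolding cc_def c by (simp add: algebra_simps)
  qed
  then have "(\<Sum>i\<in>\<sigma>. r i j * cc r (\<sigma>-{i}) j) = of_nat (Suc m) * ((-1)^m * of_nat (fact m) * prod_vec r \<sigma> j)"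
    using m by simp
  also have "\<dots> = - cc r \<sigma> j"
    unfolding cc_def m by (simp add: algebra_simps)
  finally show ?thesis .
qed

lemma reindex_pairs:
  assumes I: "finite I"
  shows "(\<Sum>i\<in>I. \<Sum>\<tau>\<in>Pow (I-{i}). f i \<tau>) = (\<Sum>\<sigma>\<in>Pow I - {{}}. \<Sum>i\<in>\<sigma>. f i (\<sigma>-{i}))"
proof -
  have "(\<Sum>i\<in>I. \<Sum>\<tau>\<in>Pow (I-{i}). f i \<tau>) = (\<Sum>p\<in>Sigma I (\<lambda>i. Pow (I-{i})). f (fst p) (snd p))"
    using I by (subst sum.Sigma) (auto simp: split_def)
  also have "\<dots> = (\<Sum>q\<in>Sigma (Pow I - {{}}) (\<lambda>\<sigma>. \<sigma>). f (snd q) (fst q - {snd q}))"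
    by (rule sum.reindex_bij_witness[where i="\<lambda>q. (snd q, fst q - {snd q})" and j="\<lambda>p. (insert (fst p) (snd p), fst p)"])
       (auto simp: subset_Diff_insert)
  also have "\<dots> = (\<Sum>\<sigma>\<in>Pow I - {{}}. \<Sum>i\<in>\<sigma>. f i (\<sigma>-{i}))"
    using I by (subst sum.Sigma) (auto simp: split_def intro: finite_subset)
  finally show ?thesis .
qed

lemma peel:
  assumes A: "finite A" and jA: "j \<in> A" and I: "finite I"
  shows "SS r (A-{j}) I = (\<Sum>\<sigma>\<in>Pow I. cc r \<sigma> j * SS r A (I - \<sigma>))"
  using I
proof (induction "card I" arbitrary: I rule: less_induct)
  case less
  have IH: "\<And>i. i \<in> I \<Longrightarrow> SS r (A-{j}) (I-{i}) = (\<Sum>\<tau>\<in>Pow (I-{i}). cc r \<tau> j * SS r A (I - {i} - \<tau>))"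
    using less by (metis card_Diff1_less finite_Diff)
  have "(\<Sum>i\<in>I. r i j * SS r (A-{j}) (I-{i}))
      = (\<Sum>i\<in>I. \<Sum>\<tau>\<in>Pow (I-{i}). r i j * cc r \<tau> j * SS r A (I - (\<tau> \<union> {i})))"
  proof (rule sum.cong[OF refl])
    fix i assume i: "i \<in> I"
    have e: "\<And>\<tau>. I - {i} - \<tau> = I - (\<tau> \<union> {i})" by blast
    show "r i j * SS r (A-{j}) (I-{i}) = (\<Sum>\<tau>\<in>Pow (I-{i}). r i j * cc r \<tau> j * SS r A (I - (\<tau> \<union> {i})))"
      unfolding IH[OF i] sum_distrib_left e by (simp add: mult.assoc)
  qed
  also have "\<dots> = (\<Sum>\<sigma>\<in>Pow I - {{}}. \<Sum>i\<in>\<sigma>. r i j * cc r (\<sigma>-{i}) j * SS r A (I - ((\<sigma>-{i}) \<union> {i})))"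
    by (rule reindex_pairs[OF less.prems])
  also have "\<dots> = (\<Sum>\<sigma>\<in>Pow I - {{}}. (\<Sum>i\<in>\<sigma>. r i j * cc r (\<sigma>-{i}) j) * SS r A (I - \<sigma>))"
    by (rule sum.cong[OF refl]) (auto simp: sum_distrib_right insert_absorb intro!: sum.cong)
  also have "\<dots> = (\<Sum>\<sigma>\<in>Pow I - {{}}. - cc r \<sigma> j * SS r A (I - \<sigma>))"
  proof (intro sum.cong refl)
    fix \<sigma> assume "\<sigma> \<in> Pow I - {{}}"
    then have "finite \<sigma>" "\<sigma> \<noteq> {}" using less.prems finite_subset by auto
    then show "(\<Sum>i\<in>\<sigma>. r i j * cc r (\<sigma>-{i}) j) * SS r A (I - \<sigma>) = - cc r \<sigma> j * SS r A (I - \<sigma>)"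
      by (simp add: cc_remove)
  qed
  finally have eq: "(\<Sum>i\<in>I. r i j * SS r (A-{j}) (I-{i})) = - (\<Sum>\<sigma>\<in>Pow I - {{}}. cc r \<sigma> j * SS r A (I - \<sigma>))"
    by (simp add: sum_negf)
  have "(\<Sum>\<sigma>\<in>Pow I. cc r \<sigma> j * SS r A (I - \<sigma>)) = cc r {} j * SS r A (I - {}) + (\<Sum>\<sigma>\<in>Pow I - {{}}. cc r \<sigma> j * SS r A (I - \<sigma>))"
    using less.prems by (subst sum.remove[of _ "{}"]) auto
  then show ?case using SS_rec[OF A less.prems jA, of r] eq by simp
qed

definition tuples :: "nat \<Rightarrow> nat set \<Rightarrow> (nat \<Rightarrow> nat set) set" where
  "tuples k I = {\<tau>. \<tau> \<in> {1..k} \<rightarrow>\<^sub>E Pow I \<and>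
              (\<forall>s\<in>{1..k}. \<forall>t\<in>{1..k}. s \<noteq> t \<longrightarrow> \<tau> s \<inter> \<tau> t = {})}"

lemma finite_tuples: "finite I \<Longrightarrow> finite (tuples k I)"
  unfolding tuples_def by (rule finite_subset[OF _ finite_PiE[of "{1..k}" "\<lambda>_. Pow I"]]) auto

lemma tuples_Suc_reindex:
  assumes I: "finite I"
  shows "(\<Sum>\<sigma>\<in>Pow I. \<Sum>\<tau>\<in>tuples k (I-\<sigma>). f (\<tau>(Suc k := \<sigma>)))
       = (\<Sum>\<tau>\<in>tuples (Suc k) I. f \<tau>)"
proof -
  have "(\<Sum>\<sigma>\<in>Pow I. \<Sum>\<tau>\<in>tuples k (I-\<sigma>). f (\<tau>(Suc k := \<sigma>)))
      = (\<Sum>p\<in>Sigma (Pow I) (\<lambda>\<sigma>. tuples k (I-\<sigma>)). f ((snd p)(Suc k := fst p)))"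
    using I by (subst sum.Sigma) (auto simp: split_def intro: finite_tuples)
  also have "\<dots> = (\<Sum>\<tau>\<in>tuples (Suc k) I. f \<tau>)"
  proof (rule sum.reindex_bij_witness[where i="\<lambda>\<tau>. (\<tau> (Suc k), \<tau>(Suc k := undefined))"
                                       and j="\<lambda>p. (snd p)(Suc k := fst p)"])
    fix p assume p: "p \<in> Sigma (Pow I) (\<lambda>\<sigma>. tuples k (I-\<sigma>))"
    then obtain \<sigma> \<tau> where pe: "p = (\<sigma>, \<tau>)" and s: "\<sigma> \<subseteq> I" and t: "\<tau> \<in> tuples k (I-\<sigma>)" by auto
    have tu: "\<tau> (Suc k) = undefined" using t unfolding tuples_def by (auto simp: PiE_def extensional_def)
    show "(((snd p)(Suc k := fst p)) (Suc k), ((snd p)(Suc k := fst p))(Suc k := undefined)) = p"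
      using tu pe by (auto simp: fun_eq_iff)
    show "(snd p)(Suc k := fst p) \<in> tuples (Suc k) I"
      using t s unfolding pe tuples_def
      by (auto simp: PiE_def extensional_def Pi_def)
  next
    fix \<tau> assume t: "\<tau> \<in> tuples (Suc k) I"
    show "(snd (\<tau> (Suc k), \<tau>(Suc k := undefined)))(Suc k := fst (\<tau> (Suc k), \<tau>(Suc k := undefined))) = \<tau>"
      by auto
    show "(\<tau> (Suc k), \<tau>(Suc k := undefined)) \<in> Sigma (Pow I) (\<lambda>\<sigma>. tuples k (I-\<sigma>))"
    proof -
      have t1: "\<tau> \<in> {1..Suc k} \<rightarrow>\<^sub>E Pow I"
        and t2: "\<forall>s\<in>{1..Suc k}. \<forall>t\<in>{1..Suc k}. s \<noteq> t \<longrightarrow> \<tau> s \<inter> \<tau> t = {}"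
        using t unfolding tuples_def by simp_all
      have a: "\<tau> (Suc k) \<subseteq> I" using PiE_mem[OF t1, of "Suc k"] by simp
      have b: "\<tau>(Suc k := undefined) \<in> {1..k} \<rightarrow>\<^sub>E Pow (I - \<tau> (Suc k))"
        unfolding PiE_iff
      proof (intro conjI ballI)
        fix i assume i: "i \<in> {1..k}"
        have "\<tau> i \<subseteq> I" using PiE_mem[OF t1, of i] i by simp
        moreover have "\<tau> i \<inter> \<tau> (Suc k) = {}" using t2 i by simp
        ultimately show "(\<tau>(Suc k := undefined)) i \<in> Pow (I - \<tau> (Suc k))" using i by auto
      next
        show "\<tau>(Suc k := undefined) \<in> extensional {1..k}"
          unfolding extensional_def using PiE_arb[OF t1] by auto
      qed
      have c: "\<forall>s\<in>{1..k}. \<forall>t\<in>{1..k}. s \<noteq> t \<longrightarrow> (\<tau>(Suc k := undefined)) s \<inter> (\<tau>(Suc k := undefined)) t = {}"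
        using t2 by auto
      show ?thesis using a b c unfolding tuples_def by simp
    qed
  qed auto
  finally show ?thesis .
qed

lemma multi:
  assumes A: "finite A" and I: "finite I"
    and inj: "inj_on j {1..k}" and jA: "j ` {1..k} \<subseteq> A"
  shows "SS r (A - j ` {1..k}) I = (\<Sum>\<tau>\<in>tuples k I. (\<Prod>t=1..k. cc r (\<tau> t) (j t)) * SS r A (I - (\<Union>t\<in>{1..k}. \<tau> t)))"
  using I inj jA
proof (induction k arbitrary: I)
  case 0
  then show ?case by (simp add: tuples_def)
next
  case (Suc k)
  let ?A' = "A - j ` {1..k}"
  have inj': "inj_on j {1..k}" using Suc.prems by (auto intro: inj_on_subset)
  have jA': "j ` {1..k} \<subseteq> A" using Suc.prems by auto
  have nj: "j (Suc k) \<notin> j ` {1..k}"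
  proof
    assume "j (Suc k) \<in> j ` {1..k}"
    then obtain x where x: "x \<in> {1..k}" "j (Suc k) = j x" by auto
    then have "Suc k = x" using inj_onD[OF Suc.prems(2)] by auto
    then show False using x by auto
  qed
  have jk: "j (Suc k) \<in> ?A'" using Suc.prems nj by auto
  have eqA: "A - j ` {1..Suc k} = ?A' - {j (Suc k)}"
    by (auto simp: atLeastAtMostSuc_conv)
  have "SS r (A - j ` {1..Suc k}) I = (\<Sum>\<sigma>\<in>Pow I. cc r \<sigma> (j (Suc k)) * SS r ?A' (I - \<sigma>))"
    unfolding eqA by (rule peel) (use A jk Suc.prems in auto)
  also have "\<dots> = (\<Sum>\<sigma>\<in>Pow I. \<Sum>\<tau>\<in>tuples k (I-\<sigma>).
       (\<lambda>\<tau>. (\<Prod>t=1..Suc k. cc r (\<tau> t) (j t)) * SS r A (I - (\<Union>t\<in>{1..Suc k}. \<tau> t))) (\<tau>(Suc k := \<sigma>)))"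
  proof (rule sum.cong[OF refl])
    fix \<sigma> assume s: "\<sigma> \<in> Pow I"
    have e: "SS r ?A' (I - \<sigma>) = (\<Sum>\<tau>\<in>tuples k (I-\<sigma>). (\<Prod>t=1..k. cc r (\<tau> t) (j t)) * SS r A (I - \<sigma> - (\<Union>t\<in>{1..k}. \<tau> t)))"
      using Suc.IH[of "I - \<sigma>"] Suc.prems inj' jA' by auto
    show "cc r \<sigma> (j (Suc k)) * SS r ?A' (I - \<sigma>) = (\<Sum>\<tau>\<in>tuples k (I-\<sigma>).
       (\<lambda>\<tau>. (\<Prod>t=1..Suc k. cc r (\<tau> t) (j t)) * SS r A (I - (\<Union>t\<in>{1..Suc k}. \<tau> t))) (\<tau>(Suc k := \<sigma>)))"
      unfolding e sum_distrib_left
    proof (intro sum.cong refl)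
      fix \<tau> assume "\<tau> \<in> tuples k (I-\<sigma>)"
      have p: "(\<Prod>t=1..Suc k. cc r ((\<tau>(Suc k := \<sigma>)) t) (j t)) = cc r \<sigma> (j (Suc k)) * (\<Prod>t=1..k. cc r (\<tau> t) (j t))"
        by (simp add: atLeastAtMostSuc_conv mult.commute)
      have u: "(\<Union>t\<in>{1..Suc k}. (\<tau>(Suc k := \<sigma>)) t) = \<sigma> \<union> (\<Union>t\<in>{1..k}. \<tau> t)"
        by (auto simp: atLeastAtMostSuc_conv)
      show "cc r \<sigma> (j (Suc k)) * ((\<Prod>t=1..k. cc r (\<tau> t) (j t)) * SS r A (I - \<sigma> - (\<Union>t\<in>{1..k}. \<tau> t))) =
         (\<Prod>t=1..Suc k. cc r ((\<tau>(Suc k := \<sigma>)) t) (j t)) * SS r A (I - (\<Union>t\<in>{1..Suc k}. (\<tau>(Suc k := \<sigma>)) t))"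
      proof -
        have d: "I - \<sigma> - (\<Union>t\<in>{1..k}. \<tau> t) = I - (\<sigma> \<union> (\<Union>t\<in>{1..k}. \<tau> t))" by blast
        show ?thesis unfolding p u d by (simp add: mult.assoc)
      qed
    qed
  qed
  also have "\<dots> = (\<Sum>\<tau>\<in>tuples (Suc k) I. (\<Prod>t=1..Suc k. cc r (\<tau> t) (j t)) * SS r A (I - (\<Union>t\<in>{1..Suc k}. \<tau> t)))"
    by (rule tuples_Suc_reindex[OF Suc.prems(1)])
  finally show ?case .
qed

lemma conv:
  assumes fin: "finite \<sigma>"
  shows "S_T N T (sublist_vecs r \<sigma>) = SS r ({1..N} - T) \<sigma>"
proof -
  define s where "s = sorted_list_of_set \<sigma>"
  define L where "L = length s"
  define B where "B = {1..N} - T"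
  define f where "f = (\<lambda>i. s ! (i - 1))"
  define f' where "f' = inv_into {1..L} f"
  have b1: "bij_betw ((!) s) {..<L} \<sigma>"
    by (rule bij_betw_nth) (use fin in \<open>auto simp: s_def L_def\<close>)
  have b2: "bij_betw (\<lambda>i. i - 1) {1..L} {..<L}"
    by (rule bij_betw_byWitness[where f'="\<lambda>i. i + 1"]) auto
  have bf: "bij_betw f {1..L} \<sigma>"
    unfolding f_def using bij_betw_trans[OF b2 b1] by (simp add: comp_def)
  have fi: "\<And>i. i \<in> {1..L} \<Longrightarrow> f' (f i) = i" unfolding f'_def using bf by (simp add: bij_betw_inv_into_left)
  have ff: "\<And>x. x \<in> \<sigma> \<Longrightarrow> f (f' x) = x" unfolding f'_def using bf by (simp add: bij_betw_inv_into_right)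
  have fm: "\<And>i. i \<in> {1..L} \<Longrightarrow> f i \<in> \<sigma>" using bf by (auto simp: bij_betw_def)
  have fm': "\<And>x. x \<in> \<sigma> \<Longrightarrow> f' x \<in> {1..L}" unfolding f'_def using bf
    by (metis bij_betw_def inv_into_into)
  have lhs: "S_T N T (sublist_vecs r \<sigma>) = (\<Sum>\<rho>\<in>inj_maps {1..L} B. \<Prod>i\<in>{1..L}. r (f i) (\<rho> i))"
    unfolding S_T_def sublist_vecs_def inj_maps_def
    by (intro sum.cong prod.cong) (auto simp: s_def L_def B_def f_def)
  also have "\<dots> = SS r B \<sigma>"
    unfolding SS_def
  proof (rule sum.reindex_bij_witness[where i="\<lambda>\<rho>. restrict (\<rho> \<circ> f) {1..L}" and j="\<lambda>\<rho>. restrict (\<rho> \<circ> f') \<sigma>"])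
    fix \<rho> assume "\<rho> \<in> inj_maps {1..L} B"
    then have h: "\<rho> \<in> {1..L} \<rightarrow>\<^sub>E B" "inj_on \<rho> {1..L}" by (auto simp: inj_maps_def)
    show "restrict (restrict (\<rho> \<circ> f') \<sigma> \<circ> f) {1..L} = \<rho>"
      using h(1) fi fm by (auto simp: PiE_def extensional_def fun_eq_iff)
    have "inj_on (\<rho> \<circ> f') \<sigma>"
      using h(2) fm' unfolding inj_on_def by (metis comp_apply ff)
    moreover have "restrict (\<rho> \<circ> f') \<sigma> \<in> \<sigma> \<rightarrow>\<^sub>E B"
      by (auto simp: restrict_PiE_iff intro!: PiE_mem[OF h(1)] fm')
    ultimately show "restrict (\<rho> \<circ> f') \<sigma> \<in> inj_maps \<sigma> B"
      unfolding inj_maps_def by simp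
    show "(\<Prod>x\<in>\<sigma>. r x (restrict (\<rho> \<circ> f') \<sigma> x)) = (\<Prod>i\<in>{1..L}. r (f i) (\<rho> i))"
      using prod.reindex_bij_betw[OF bf, of "\<lambda>x. r x (restrict (\<rho> \<circ> f') \<sigma> x)"]
      by (auto simp: fi fm intro!: prod.cong)
  next
    fix \<rho> assume "\<rho> \<in> inj_maps \<sigma> B"
    then have h: "\<rho> \<in> \<sigma> \<rightarrow>\<^sub>E B" "inj_on \<rho> \<sigma>" by (auto simp: inj_maps_def)
    show "restrict (restrict (\<rho> \<circ> f) {1..L} \<circ> f') \<sigma> = \<rho>"
      using h(1) ff fm' by (auto simp: PiE_def extensional_def fun_eq_iff)
    have "inj_on (\<rho> \<circ> f) {1..L}"
      using h(2) fm unfolding inj_on_def by (metis comp_apply fi)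
    moreover have "restrict (\<rho> \<circ> f) {1..L} \<in> {1..L} \<rightarrow>\<^sub>E B"
      by (simp add: restrict_PiE_iff Pi_def fm PiE_mem[OF h(1)])
    ultimately show "restrict (\<rho> \<circ> f) {1..L} \<in> inj_maps {1..L} B"
      unfolding inj_maps_def by simp
  qed
  finally show ?thesis unfolding B_def .
qed

theorem proposition2p7:
  fixes p N n k :: nat
    and r :: "nat \<Rightarrow> (nat \<Rightarrow> 'a::{field, finite})"
    and j :: "nat \<Rightarrow> nat"
  assumes "prime p" and "CARD('a) = p"
    and "inj_on j {1..k}" and "j ` {1..k} \<subseteq> {1..N}"
  shows "S_T N (j ` {1..k}) (sublist_vecs r {1..n}) =
    (\<Sum>\<tau> \<in> {\<tau>. \<tau> \<in> {1..k} \<rightarrow>\<^sub>E Pow {1..n} \<and>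
              (\<forall>s\<in>{1..k}. \<forall>t\<in>{1..k}. s \<noteq> t \<longrightarrow> \<tau> s \<inter> \<tau> t = {})}.
       (\<Prod>t=1..k. (-1) ^ card (\<tau> t) * of_nat (fact (card (\<tau> t)) :: nat) * prod_vec r (\<tau> t) (j t))
       * S N (sublist_vecs r ({1..n} - (\<Union>t\<in>{1..k}. \<tau> t))))"
proof -
  have "S_T N (j ` {1..k}) (sublist_vecs r {1..n}) = SS r ({1..N} - j ` {1..k}) {1..n}"
    by (rule conv) simp
  also have "\<dots> = (\<Sum>\<tau>\<in>tuples k {1..n}. (\<Prod>t=1..k. cc r (\<tau> t) (j t)) * SS r {1..N} ({1..n} - (\<Union>t\<in>{1..k}. \<tau> t)))"
    by (rule multi) (use assms in auto)
  also have "\<dots> = (\<Sum>\<tau>\<in>tuples k {1..n}. (\<Prod>t=1..k. cc r (\<tau> t) (j t)) * S N (sublist_vecs r ({1..n} - (\<Union>t\<in>{1..k}. \<tau> t))))"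
    by (intro sum.cong refl arg_cong2[where f="(*)"]) (simp add: conv)
  finally show ?thesis unfolding tuples_def cc_def .
qed

end
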